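(* Let $T$ be the BFS tree produced by temporal BFS on a temporal graph $G=(V,E)$ from source $s$ with starting time $t_s$, and let $v\neq s$. If $v$ occurs in $T$, let $v_o$ be its occurrence of smallest level; then the sequence of tree edges on the path from the root to $v_o$ is a shortest temporal path from $s$ to $v$, i.e. a temporal path from $s$ to $v$ starting at or after $t_s$ whose number of hops is minimal among all temporal paths from $s$ to $v$ starting at or after $t_s$. If $v$ does not occur in $T$, then there is no temporal path from $s$ to $v$ starting at or after $t_s$.
   Context: A temporal graph is a pair $G=(V,E)$ where $V$ is a finite set of vertices and $E$ is a finite set of temporal edges, i.e. triples $(u,v,t)$ with $u,v\in V$, $u\neq v$, $t\in\mathbb{R}$ (the time at which the edge is active); distinct elements of $E$ are distinct triples. Fix $t_s\in\mathbb{R}$ and $s\in V$. A temporal path from $x$ to $y$ (starting at or after $t_s$) is a sequence $P=\langle (w_1,w_2,t_1),\dots,(w_k,w_{k+1},t_k)\rangle$ of $k\ge1$ edges of $E$ with $w_1=x$, $w_{k+1}=y$ and $t_s\le t_1\le t_2\le\dots\le t_k$; its number of hops is $k$. Temporal BFS. Records are tuples $(x,d,\tau,p)$ (vertex $x$, level $d$, time $\tau$, predecessor record $p$ or none); every record ever created is an occurrence (node) of the BFS tree $T$, rooted at the initial record, with a tree edge from the predecessor record to the record; the level and time of an occurrence are the final values of its fields. For each $x\in V$ a current value $\sigma(x)$ is kept, initially $\infty$, and set to $\tau$ whenever a record of $x$ is created or its time is updated to $\tau$. Initially the FIFO queue $Q$ contains only $(s,0,t_s,\text{none})$ and $\sigma(s)=t_s$;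 no edge is traversed. While $Q\neq\emptyset$: pop the front record $R=(u,d_u,\sigma_u,p_u)$; let $B$ be the set of edges $(u,v,t)\in E$ not yet traversed with $\sigma_u\le t$; for each vertex $v$ such that $B$ contains an edge to $v$ (in any order), let $e=(u,v,t)$ be the edge of $B$ to $v$ with smallest $t$, mark $e$ traversed, and: (i) if $Q$ contains no record of $v$ and $\sigma(v)>t$, create $(v,d_u+1,t,R)$ and append it to $Q$; (ii) if $Q$ contains a record of $v$ with level $d_u+1$ and $\sigma(v)>t$, set that record's time to $t$ and predecessor to $R$; (iii) if $Q$ contains a record of $v$ but none with level $d_u+1$, and $\sigma(v)>t$, create $(v,d_u+1,t,R)$ and append it to $Q$. When a record's predecessor is $R$, the tree edge into it corresponds to the last edge $e=(u,v,t)$ that created or updated it. *)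

theory Defs
  imports Complex_Main "HOL-Library.Extended_Real"
begin

type_synonym 'v tedge = "'v \<times> 'v \<times> real"

definition temporal_path :: "'v tedge set \<Rightarrow> real \<Rightarrow> 'v \<Rightarrow> 'v \<Rightarrow> 'v tedge list \<Rightarrow> bool" where
  "temporal_path E ts x y P \<longleftrightarrow>
     P \<noteq> [] \<and> set P \<subseteq> E \<and>
     fst (hd P) = x \<and> fst (snd (last P)) = y \<and>
     (\<forall>i. Suc i < length P \<longrightarrow> fst (snd (P ! i)) = fst (P ! Suc i)) \<and>
     ts \<le> snd (snd (hd P)) \<and>
     (\<forall>i. Suc i < length P \<longrightarrow> snd (snd (P ! i)) \<le> snd (snd (P ! Suc i)))"

definition shortest_temporal_path :: "'v tedge set \<Rightarrow> real \<Rightarrow> 'v \<Rightarrow> 'v \<Rightarrow> 'v tedge list \<Rightarrow> bool" where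
  "shortest_temporal_path E ts x y P \<longleftrightarrow>
     temporal_path E ts x y P \<and> (\<forall>Q. temporal_path E ts x y Q \<longrightarrow> length P \<le> length Q)"

text \<open>A record (occurrence of the BFS tree): vertex, level, time, predecessor record
  (index into the list of all records ever created) and the temporal edge that last
  created/updated it (the tree edge into it).\<close>
record 'v brec =
  rv :: 'v
  rlev :: nat
  rtime :: real
  rpred :: "nat option"
  redge :: "'v tedge option"

text \<open>State: all records ever created (record i is the i-th created), FIFO queue of record
  indices, the current values sigma, and the set of traversed edges.\<close>
record 'v bstate =
  recs :: "'v brec list"
  queue :: "nat list"
  sig :: "'v \<Rightarrow> ereal"
  trav :: "'v tedge set"

definition bfs_init :: "'v \<Rightarrow> real \<Rightarrow> 'v bstate" where
  "bfs_init s ts = \<lparr> recs = [\<lparr> rv = s, rlev = 0, rtime = ts, rpred = None, redge = None \<rparr>],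
                     queue = [0], sig = (\<lambda>_. \<infinity>)(s := ereal ts), trav = {} \<rparr>"

definition process_vertex :: "'v tedge set \<Rightarrow> nat \<Rightarrow> 'v bstate \<Rightarrow> 'v \<Rightarrow> 'v bstate" where
  "process_vertex B r st v = (let R = recs st ! r; u = rv R; d = rlev R;
      t = Min {t. (u, v, t) \<in> B}; e = (u, v, t);
      st1 = st\<lparr> trav := insert e (trav st) \<rparr>;
      inQ = [i \<leftarrow> queue st. rv (recs st ! i) = v];
      inQd = [i \<leftarrow> inQ. rlev (recs st ! i) = Suc d];
      create = st1\<lparr> recs := recs st @ [\<lparr> rv = v, rlev = Suc d, rtime = t, rpred = Some r, redge = Some e \<rparr>],
                    queue := queue st @ [length (recs st)],
                    sig := (sig st)(v := ereal t) \<rparr>;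
      update = st1\<lparr> recs := fold (\<lambda>i rs. rs[i := (rs ! i)\<lparr> rtime := t, rpred := Some r, redge := Some e \<rparr>])
                                 inQd (recs st),
                    sig := (sig st)(v := ereal t) \<rparr>
   in if inQ = [] \<and> sig st v > ereal t then create
      else if inQd \<noteq> [] \<and> sig st v > ereal t then update
      else if inQ \<noteq> [] \<and> inQd = [] \<and> sig st v > ereal t then create
      else st1)"

inductive bfs_step :: "'v tedge set \<Rightarrow> 'v bstate \<Rightarrow> 'v bstate \<Rightarrow> bool" for E where
  "\<lbrakk> queue st = r # rest;
     B = {e \<in> E. e \<notin> trav st \<and> fst e = rv (recs st ! r) \<and> rtime (recs st ! r) \<le> snd (snd e)};
     distinct vs; set vs = {v. \<exists>t. (rv (recs st ! r), v, t) \<in> B} \<rbrakk>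
   \<Longrightarrow> bfs_step E st (fold (\<lambda>v st'. process_vertex B r st' v) vs (st\<lparr> queue := rest \<rparr>))"

definition bfs_final :: "'v tedge set \<Rightarrow> 'v \<Rightarrow> real \<Rightarrow> 'v bstate \<Rightarrow> bool" where
  "bfs_final E s ts st \<longleftrightarrow> (bfs_step E)\<^sup>*\<^sup>* (bfs_init s ts) st \<and> queue st = []"

inductive tree_path :: "'v bstate \<Rightarrow> nat \<Rightarrow> 'v tedge list \<Rightarrow> bool" for st where
  root: "tree_path st 0 []"
| step: "\<lbrakk> i < length (recs st); rpred (recs st ! i) = Some j; redge (recs st ! i) = Some e;
           tree_path st j P \<rbrakk> \<Longrightarrow> tree_path st i (P @ [e])"

definition occurs :: "'v bstate \<Rightarrow> 'v \<Rightarrow> bool" where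
  "occurs st v \<longleftrightarrow> (\<exists>i < length (recs st). rv (recs st ! i) = v)"

definition min_level_occ :: "'v bstate \<Rightarrow> 'v \<Rightarrow> nat \<Rightarrow> bool" where
  "min_level_occ st v i \<longleftrightarrow> i < length (recs st) \<and> rv (recs st ! i) = v \<and>
     (\<forall>j < length (recs st). rv (recs st ! j) = v \<longrightarrow> rlev (recs st ! i) \<le> rlev (recs st ! j))"

end

theory Submission imports Defs begin

definition wit :: "'v bstate \<Rightarrow> 'v \<Rightarrow> nat \<Rightarrow> real \<Rightarrow> bool" where
"wit st x L t \<longleftrightarrow> (\<exists>b<length (recs st). rv (recs st ! b) = x \<and> rlev (recs st ! b) \<le> L \<and> rtime (recs st ! b) \<le> t)"

definition ext :: "'v bstate \<Rightarrow> 'v bstate \<Rightarrow> bool" where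
"ext st st' \<longleftrightarrow> length (recs st) \<le> length (recs st') \<and>
  (\<forall>i<length (recs st). rv (recs st' ! i) = rv (recs st ! i) \<and> rlev (recs st' ! i) = rlev (recs st ! i)
     \<and> rtime (recs st' ! i) \<le> rtime (recs st ! i) \<and> (i \<notin> set (queue st) \<longrightarrow> recs st' ! i = recs st ! i))"

lemma wit_ext: "wit st x L t \<Longrightarrow> ext st st' \<Longrightarrow> wit st' x L t"
  unfolding wit_def ext_def
  by (metis (no_types, lifting) dual_order.trans order_less_le_trans)

lemma wit_mono: "wit st x L t \<Longrightarrow> L \<le> L' \<Longrightarrow> t \<le> t' \<Longrightarrow> wit st x L' t'"
  unfolding wit_def using order_trans by fastforce

definition clos :: "'v tedge set \<Rightarrow> 'v bstate \<Rightarrow> nat \<Rightarrow> bool" where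
"clos E st a \<longleftrightarrow> (\<forall>x t. (rv (recs st ! a), x, t) \<in> E \<and> rtime (recs st ! a) \<le> t \<longrightarrow> wit st x (Suc (rlev (recs st ! a))) t)"

lemma clos_ext: "clos E st a \<Longrightarrow> ext st st' \<Longrightarrow> a < length (recs st) \<Longrightarrow> a \<notin> set (queue st) \<Longrightarrow> clos E st' a"
  unfolding clos_def using wit_ext unfolding ext_def by metis

definition inv_tree :: "'v tedge set \<Rightarrow> 'v bstate \<Rightarrow> bool" where
"inv_tree E st \<longleftrightarrow> (\<forall>i. 0 < i \<and> i < length (recs st) \<longrightarrow> (\<exists>j. rpred (recs st ! i) = Some j \<and> j < length (recs st)
   \<and> j \<notin> set (queue st) \<and> redge (recs st ! i) = Some (rv (recs st ! j), rv (recs st ! i), rtime (recs st ! i))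
   \<and> (rv (recs st ! j), rv (recs st ! i), rtime (recs st ! i)) \<in> E \<and> rtime (recs st ! j) \<le> rtime (recs st ! i)
   \<and> rlev (recs st ! i) = Suc (rlev (recs st ! j))))"

definition base :: "'v tedge set \<Rightarrow> 'v \<Rightarrow> real \<Rightarrow> 'v bstate \<Rightarrow> bool" where
"base E s ts st \<longleftrightarrow> recs st \<noteq> [] \<and> rv (recs st ! 0) = s \<and> rlev (recs st ! 0) = 0 \<and> rtime (recs st ! 0) = ts \<and>
 distinct (queue st) \<and> (\<forall>q\<in>set (queue st). q < length (recs st)) \<and> inv_tree E st \<and>
 (\<forall>b<length (recs st). sig st (rv (recs st ! b)) \<le> ereal (rtime (recs st ! b))) \<and>
 (\<forall>x. sig st x \<noteq> \<infinity> \<longrightarrow> (\<exists>b<length (recs st). rv (recs st ! b) = x \<and> ereal (rtime (recs st ! b)) \<le> sig st x)) \<and>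
 (\<forall>e\<in>trav st. \<exists>a<length (recs st). a \<notin> set (queue st) \<and> rv (recs st ! a) = fst e \<and> rtime (recs st ! a) \<le> snd (snd e))"

definition FI :: "'v tedge set \<Rightarrow> 'v \<Rightarrow> real \<Rightarrow> nat \<Rightarrow> 'v \<Rightarrow> real \<Rightarrow> nat \<Rightarrow> 'v tedge set \<Rightarrow> 'v set \<Rightarrow> 'v bstate \<Rightarrow> bool" where
"FI E s ts r u \<tau> d B W st \<longleftrightarrow> base E s ts st \<and> r < length (recs st) \<and> r \<notin> set (queue st) \<and> rv (recs st ! r) = u
  \<and> rtime (recs st ! r) = \<tau> \<and> rlev (recs st ! r) = d \<and>
 (\<forall>b<length (recs st). rlev (recs st ! b) \<le> Suc d) \<and> sorted (map (\<lambda>i. rlev (recs st ! i)) (queue st))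
 \<and> (\<forall>q\<in>set (queue st). d \<le> rlev (recs st ! q)) \<and>
 (\<forall>a<length (recs st). a \<notin> set (queue st) \<longrightarrow> rlev (recs st ! a) \<le> d) \<and>
 (\<forall>a<length (recs st). a \<notin> set (queue st) \<and> a \<noteq> r \<longrightarrow> clos E st a) \<and>
 (\<forall>x t. (u, x, t) \<in> E \<and> \<tau> \<le> t \<and> ((u, x, t) \<notin> B \<or> x \<in> W) \<longrightarrow> wit st x (Suc d) t) \<and>
 finite B \<and> B \<subseteq> E \<and> (\<forall>e\<in>B. fst e = u \<and> \<tau> \<le> snd (snd e))"

lemma fold_upd_len: "length (fold (\<lambda>i rs. rs[i := f (rs ! i)]) is rs) = length rs"
  by (induction "is" arbitrary: rs) auto

lemma fold_upd_nth: "(\<And>x. f (f x) = f x) \<Longrightarrow> k < length rs \<Longrightarrow>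
  fold (\<lambda>i rs. rs[i := f (rs ! i)]) is rs ! k = (if k \<in> set is then f (rs ! k) else rs ! k)"
  by (induction "is" arbitrary: rs)
   (auto simp: nth_list_update split: if_split_asm if_split, metis nth_list_update_eq nth_list_update_neq)

lemma FI_trans:
  assumes FI: "FI E s ts r u \<tau> d B W st"
    and ex: "ext st st'" and bs: "base E s ts st'"
    and q': "queue st' = queue st @ news"
    and news: "\<forall>q\<in>set news. length (recs st) \<le> q \<and> q < length (recs st') \<and> rlev (recs st' ! q) = Suc d"
    and newsS: "sorted (map (\<lambda>i. rlev (recs st' ! i)) news)"
    and newr: "\<forall>b. length (recs st) \<le> b \<and> b < length (recs st') \<longrightarrow> rlev (recs st' ! b) = Suc d \<and> b \<in> set news"
    and wx: "wit st' x (Suc d) tm"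
    and tmle: "\<forall>t. (u, x, t) \<in> B \<longrightarrow> tm \<le> t"
  shows "FI E s ts r u \<tau> d B (insert x W) st'"
proof -
  let ?n = "length (recs st)"
  have F: "base E s ts st" "r < ?n" "r \<notin> set (queue st)" "rv (recs st ! r) = u"
  "rtime (recs st ! r) = \<tau>" "rlev (recs st ! r) = d"
  "\<forall>b<?n. rlev (recs st ! b) \<le> Suc d" "sorted (map (\<lambda>i. rlev (recs st ! i)) (queue st))"
  "\<forall>q\<in>set (queue st). d \<le> rlev (recs st ! q)"
  "\<forall>a<?n. a \<notin> set (queue st) \<longrightarrow> rlev (recs st ! a) \<le> d"
  "\<forall>a<?n. a \<notin> set (queue st) \<and> a \<noteq> r \<longrightarrow> clos E st a"
  "\<forall>x t. (u, x, t) \<in> E \<and> \<tau> \<le> t \<and> ((u, x, t) \<notin> B \<or> x \<in> W) \<longrightarrow> wit st x (Suc d) t"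
  "finite B" "B \<subseteq> E" "\<forall>e\<in>B. fst e = u \<and> \<tau> \<le> snd (snd e)"
    using FI unfolding FI_def by blast+
  have E1: "?n \<le> length (recs st')" and E2: "\<And>i. i < ?n \<Longrightarrow> rv (recs st' ! i) = rv (recs st ! i) \<and> rlev (recs st' ! i) = rlev (recs st ! i)"
    and E3: "\<And>i. i < ?n \<Longrightarrow> i \<notin> set (queue st) \<Longrightarrow> recs st' ! i = recs st ! i"
    using ex unfolding ext_def by auto
  have qold: "\<forall>q\<in>set (queue st). q < ?n" using F(1) unfolding base_def by blast
  have rr: "recs st' ! r = recs st ! r" using E3 F by blast
  have rq: "r \<notin> set (queue st')" using q' news F(2,3) by auto
  have lev: "\<forall>b<length (recs st'). rlev (recs st' ! b) \<le> Suc d"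
  proof (intro allI impI)
    fix b assume "b < length (recs st')"
    thus "rlev (recs st' ! b) \<le> Suc d" using E2[of b] F(7) newr by (cases "b < ?n") auto
  qed
  have mapeq: "map (\<lambda>i. rlev (recs st' ! i)) (queue st) = map (\<lambda>i. rlev (recs st ! i)) (queue st)"
    using E2 qold by auto
  have srt: "sorted (map (\<lambda>i. rlev (recs st' ! i)) (queue st'))"
  proof -
    have s1: "sorted (map (\<lambda>i. rlev (recs st' ! i)) (queue st))" using F(8) mapeq by metis
    have s2: "\<forall>q\<in>set (queue st). rlev (recs st' ! q) \<le> Suc d" using E2 F(7) qold by auto
    show ?thesis unfolding q' map_append sorted_append using s1 s2 newsS news by auto
  qed
  have dq: "\<forall>q\<in>set (queue st'). d \<le> rlev (recs st' ! q)"
    using q' news F(9) E2 qold by auto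
  have pop: "\<And>a. a < length (recs st') \<Longrightarrow> a \<notin> set (queue st') \<Longrightarrow> a < ?n \<and> a \<notin> set (queue st)"
    using newr q' by (metis UnCI not_le set_append)
  have plev: "\<forall>a<length (recs st'). a \<notin> set (queue st') \<longrightarrow> rlev (recs st' ! a) \<le> d"
    using pop F(10) E2 by fastforce
  have pclos: "\<forall>a<length (recs st'). a \<notin> set (queue st') \<and> a \<noteq> r \<longrightarrow> clos E st' a"
  proof (intro allI impI)
    fix a assume a: "a < length (recs st')" "a \<notin> set (queue st') \<and> a \<noteq> r"
    then have a1: "a < ?n" and a2: "a \<notin> set (queue st)" using pop by auto
    have "clos E st a" using F(11) a1 a2 a(2) by blast
    from clos_ext[OF this ex a1 a2] show "clos E st' a" .
  qed
  have pw: "\<forall>y t. (u, y, t) \<in> E \<and> \<tau> \<le> t \<and> ((u, y, t) \<notin> B \<or> y \<in> insert x W) \<longrightarrow> wit st' y (Suc d) t"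
  proof (intro allI impI)
    fix y t assume a: "(u, y, t) \<in> E \<and> \<tau> \<le> t \<and> ((u, y, t) \<notin> B \<or> y \<in> insert x W)"
    show "wit st' y (Suc d) t"
    proof (cases "(u, y, t) \<notin> B \<or> y \<in> W")
      case True
      hence "wit st y (Suc d) t" using a F(12) by blast
      thus ?thesis using wit_ext[OF _ ex] by blast
    next
      case False
      hence "y = x" "(u, x, t) \<in> B" using a by auto
      hence "tm \<le> t" using tmle by blast
      thus ?thesis using wit_mono[OF wx order_refl] \<open>y = x\<close> by blast
    qed
  qed
  have "r < length (recs st')" using E1 F(2) by simp
  then show ?thesis unfolding FI_def using bs F(4,5,6,13,14,15) rr rq lev srt dq plev pclos pw by simp
qed

lemma base_D:
  assumes "base E s ts st"
  shows "recs st \<noteq> []" "rv (recs st ! 0) = s" "rlev (recs st ! 0) = 0" "rtime (recs st ! 0) = ts"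
 "distinct (queue st)" "\<forall>q\<in>set (queue st). q < length (recs st)" "inv_tree E st"
 "\<forall>b<length (recs st). sig st (rv (recs st ! b)) \<le> ereal (rtime (recs st ! b))"
 "\<forall>x. sig st x \<noteq> \<infinity> \<longrightarrow> (\<exists>b<length (recs st). rv (recs st ! b) = x \<and> ereal (rtime (recs st ! b)) \<le> sig st x)"
 "\<forall>e\<in>trav st. \<exists>a<length (recs st). a \<notin> set (queue st) \<and> rv (recs st ! a) = fst e \<and> rtime (recs st ! a) \<le> snd (snd e)"
  using assms unfolding base_def by blast+

lemma FI_D:
  assumes "FI E s ts r u \<tau> d B W st"
  shows "base E s ts st" "r < length (recs st)" "r \<notin> set (queue st)" "rv (recs st ! r) = u"
  "rtime (recs st ! r) = \<tau>" "rlev (recs st ! r) = d"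
  "\<forall>b<length (recs st). rlev (recs st ! b) \<le> Suc d"
  "finite B" "B \<subseteq> E" "\<forall>e\<in>B. fst e = u \<and> \<tau> \<le> snd (snd e)"
  using assms unfolding FI_def by blast+

lemma pv_noop:
  assumes FI: "FI E s ts r u \<tau> d B W st"
    and eB: "(u, x, tm) \<in> B" and tmle: "\<forall>t. (u, x, t) \<in> B \<longrightarrow> tm \<le> t"
    and ns: "\<not> ereal tm < sig st x"
  shows "FI E s ts r u \<tau> d B (insert x W) (st\<lparr>trav := insert (u, x, tm) (trav st)\<rparr>)"
proof -
  let ?st = "st\<lparr>trav := insert (u, x, tm) (trav st)\<rparr>"
  note F = FI_D[OF FI]
  note BD = base_D[OF F(1)]
  have ex: "ext st ?st" unfolding ext_def by simp
  have bs: "base E s ts ?st"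
  proof -
    have "\<exists>a<length (recs st). a \<notin> set (queue st) \<and> rv (recs st ! a) = u \<and> rtime (recs st ! a) \<le> tm"
      using F(2,3,4,5,10) eB by fastforce
    then show ?thesis using F(1) unfolding base_def inv_tree_def by auto
  qed
  have "sig st x \<noteq> \<infinity>" using ns by auto
  then obtain b where b: "b < length (recs st)" "rv (recs st ! b) = x" "ereal (rtime (recs st ! b)) \<le> sig st x"
    using BD(9) by blast
  have "rtime (recs st ! b) \<le> tm" using b(3) ns by (meson ereal_less_eq(3) not_less order_trans)
  then have wx: "wit ?st x (Suc d) tm" unfolding wit_def using b F(7) by auto
  show ?thesis
    by (rule FI_trans[OF FI ex bs, where news = "[]"]) (use wx tmle in auto)
qed

lemma pv_create:
  assumes FI: "FI E s ts r u \<tau> d B W st"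
    and eB: "(u, x, tm) \<in> B" and tmle: "\<forall>t. (u, x, t) \<in> B \<longrightarrow> tm \<le> t"
    and gt: "ereal tm < sig st x"
  shows "FI E s ts r u \<tau> d B (insert x W) (st\<lparr>trav := insert (u, x, tm) (trav st),
     recs := recs st @ [\<lparr>rv = x, rlev = Suc d, rtime = tm, rpred = Some r, redge = Some (u, x, tm)\<rparr>],
     queue := queue st @ [length (recs st)], sig := (sig st)(x := ereal tm)\<rparr>)"
    (is "FI _ _ _ _ _ _ _ _ _ ?st")
proof -
  let ?n = "length (recs st)"
  let ?new = "\<lparr>rv = x, rlev = Suc d, rtime = tm, rpred = Some r, redge = Some (u, x, tm)\<rparr>"
  note F = FI_D[OF FI]
  note BD = base_D[OF F(1)]
  have rs: "recs ?st = recs st @ [?new]" "queue ?st = queue st @ [?n]" "sig ?st = (sig st)(x := ereal tm)"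
    "trav ?st = insert (u, x, tm) (trav st)" by simp_all
  have nth_old: "\<And>i. i < ?n \<Longrightarrow> recs ?st ! i = recs st ! i" by (simp add: nth_append)
  have nth_new: "recs ?st ! ?n = ?new" by simp
  have len: "length (recs ?st) = Suc ?n" by simp
  have nq: "?n \<notin> set (queue st)" using BD(6) by auto
  have ex: "ext st ?st" unfolding ext_def using nth_old by auto
  have tree: "inv_tree E ?st" unfolding inv_tree_def
  proof (intro allI impI)
    fix i assume i: "0 < i \<and> i < length (recs ?st)"
    show "\<exists>j. rpred (recs ?st ! i) = Some j \<and> j < length (recs ?st) \<and> j \<notin> set (queue ?st) \<and>
          redge (recs ?st ! i) = Some (rv (recs ?st ! j), rv (recs ?st ! i), rtime (recs ?st ! i)) \<and>
          (rv (recs ?st ! j), rv (recs ?st ! i), rtime (recs ?st ! i)) \<in> E \<and>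
          rtime (recs ?st ! j) \<le> rtime (recs ?st ! i) \<and> rlev (recs ?st ! i) = Suc (rlev (recs ?st ! j))"
    proof (cases "i < ?n")
      case True
      then obtain j where j: "rpred (recs st ! i) = Some j" "j < ?n" "j \<notin> set (queue st)"
          "redge (recs st ! i) = Some (rv (recs st ! j), rv (recs st ! i), rtime (recs st ! i))"
          "(rv (recs st ! j), rv (recs st ! i), rtime (recs st ! i)) \<in> E"
          "rtime (recs st ! j) \<le> rtime (recs st ! i)" "rlev (recs st ! i) = Suc (rlev (recs st ! j))"
        using BD(7) i unfolding inv_tree_def by blast
      show ?thesis using j True nth_old[of i] nth_old[of j] by (intro exI[of _ j]) auto
    next
      case False
      then have "i = ?n" using i len by simp
      then show ?thesis using F(2,3,4,5,6,9,10) eB nth_old[of r]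
        by (intro exI[of _ r]) auto
    qed
  qed
  have s4: "\<forall>b<length (recs ?st). sig ?st (rv (recs ?st ! b)) \<le> ereal (rtime (recs ?st ! b))"
  proof (intro allI impI)
    fix b assume b: "b < length (recs ?st)"
    show "sig ?st (rv (recs ?st ! b)) \<le> ereal (rtime (recs ?st ! b))"
    proof (cases "b < ?n")
      case True
      have eq: "recs ?st ! b = recs st ! b" using nth_old True by blast
      have h: "sig st (rv (recs st ! b)) \<le> ereal (rtime (recs st ! b))" using BD(8) True by blast
      show ?thesis unfolding eq rs(3) using h gt
        by (cases "rv (recs st ! b) = x") (auto, meson ereal_less_eq(3) less_imp_le order_less_le_trans)
    next
      case False then have "b = ?n" using b len by simp
      then show ?thesis by simp
    qed
  qed
  have s5: "\<forall>y. sig ?st y \<noteq> \<infinity> \<longrightarrow> (\<exists>b<length (recs ?st). rv (recs ?st ! b) = y \<and> ereal (rtime (recs ?st ! b)) \<le> sig ?st y)"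
  proof (intro allI impI)
    fix y assume y: "sig ?st y \<noteq> \<infinity>"
    show "\<exists>b<length (recs ?st). rv (recs ?st ! b) = y \<and> ereal (rtime (recs ?st ! b)) \<le> sig ?st y"
    proof (cases "y = x")
      case True then show ?thesis using len nth_new by (intro exI[of _ ?n]) auto
    next
      case False
      then obtain b where "b<?n" "rv (recs st ! b) = y" "ereal (rtime (recs st ! b)) \<le> sig st y"
        using BD(9) y by auto
      then show ?thesis using False nth_old[of b] len by (intro exI[of _ b]) auto
    qed
  qed
  have s6: "\<forall>e\<in>trav ?st. \<exists>a<length (recs ?st). a \<notin> set (queue ?st) \<and> rv (recs ?st ! a) = fst e \<and> rtime (recs ?st ! a) \<le> snd (snd e)"
  proof
    fix e assume "e \<in> trav ?st"
    then consider "e = (u, x, tm)" | "e \<in> trav st" by auto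
    then show "\<exists>a<length (recs ?st). a \<notin> set (queue ?st) \<and> rv (recs ?st ! a) = fst e \<and> rtime (recs ?st ! a) \<le> snd (snd e)"
    proof cases
      case 1 then show ?thesis using F(2,3,4,5,10) eB nth_old[of r] len by (intro exI[of _ r]) auto
    next
      case 2
      then obtain a where "a<?n" "a \<notin> set (queue st)" "rv (recs st ! a) = fst e" "rtime (recs st ! a) \<le> snd (snd e)"
        using BD(10) by blast
      then show ?thesis using nth_old[of a] len by (intro exI[of _ a]) auto
    qed
  qed
  have bs: "base E s ts ?st" unfolding base_def
    using BD(1-6) nq tree s4 s5 s6 nth_old[of 0] len by (auto simp: nth_append)
  have wx: "wit ?st x (Suc d) tm" unfolding wit_def using len nth_new by (intro exI[of _ ?n]) auto
  show ?thesis
    by (rule FI_trans[OF FI ex bs, where news = "[?n]"]) (use wx tmle len in \<open>auto simp: le_less_Suc_eq\<close>)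
qed

lemma pv_update_gen:
  fixes st st' :: "'v bstate"
  assumes FI: "FI E s ts r u \<tau> d B W st"
    and eB: "(u, x, tm) \<in> B" and tmle: "\<forall>t. (u, x, t) \<in> B \<longrightarrow> tm \<le> t"
    and gt: "ereal tm < sig st x"
    and Qd: "Qd = [i\<leftarrow>[i\<leftarrow>queue st. rv (recs st ! i) = x]. rlev (recs st ! i) = Suc d]"
    and ne: "Qd \<noteq> []"
    and f_def: "f = (\<lambda>R::'v brec. R\<lparr>rtime := tm, rpred := Some r, redge := Some (u, x, tm)\<rparr>)"
    and rs: "queue st' = queue st" "sig st' = (sig st)(x := ereal tm)" "trav st' = insert (u, x, tm) (trav st)"
    and len: "length (recs st') = length (recs st)"
    and nth: "\<And>k. k < length (recs st) \<Longrightarrow> recs st' ! k = (if k \<in> set Qd then f (recs st ! k) else recs st ! k)"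
  shows "FI E s ts r u \<tau> d B (insert x W) st'"
proof -
  let ?n = "length (recs st)"
  note F = FI_D[OF FI]
  note BD = base_D[OF F(1)]
  have sQd: "set Qd = {i \<in> set (queue st). rv (recs st ! i) = x \<and> rlev (recs st ! i) = Suc d}"
    unfolding Qd by auto
  have Qn: "\<And>k. k \<in> set Qd \<Longrightarrow> k < ?n \<and> k \<noteq> 0 \<and> k \<noteq> r \<and> k \<in> set (queue st)"
    using sQd BD(3,6) F(3) by force
  have nthU: "\<And>k. k \<in> set Qd \<Longrightarrow> recs st' ! k = f (recs st ! k)" using nth Qn by auto
  have nthO: "\<And>k. k < ?n \<Longrightarrow> k \<notin> set Qd \<Longrightarrow> recs st' ! k = recs st ! k" using nth by auto
  have nthQ: "\<And>k. k < ?n \<Longrightarrow> k \<notin> set (queue st) \<Longrightarrow> recs st' ! k = recs st ! k" using nthO sQd by auto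
  have sigle: "\<And>k. k < ?n \<Longrightarrow> rv (recs st ! k) = x \<Longrightarrow> tm \<le> rtime (recs st ! k)"
  proof -
    fix k assume "k < ?n" "rv (recs st ! k) = x"
    then have "sig st x \<le> ereal (rtime (recs st ! k))" using BD(8) by metis
    then show "tm \<le> rtime (recs st ! k)" using gt by (meson ereal_less_eq(3) less_imp_le order_less_le_trans)
  qed
  have exi: "\<forall>i<?n. rv (recs st' ! i) = rv (recs st ! i) \<and> rlev (recs st' ! i) = rlev (recs st ! i) \<and>
          rtime (recs st' ! i) \<le> rtime (recs st ! i) \<and> (i \<notin> set (queue st) \<longrightarrow> recs st' ! i = recs st ! i)"
  proof (intro allI impI)
    fix i assume i: "i < ?n"
    show "rv (recs st' ! i) = rv (recs st ! i) \<and> rlev (recs st' ! i) = rlev (recs st ! i) \<and>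
          rtime (recs st' ! i) \<le> rtime (recs st ! i) \<and> (i \<notin> set (queue st) \<longrightarrow> recs st' ! i = recs st ! i)"
    proof (cases "i \<in> set Qd")
      case True then show ?thesis using nthU[of i] sigle[of i] i sQd unfolding f_def by auto
    next
      case False then show ?thesis using nthO[of i] i by auto
    qed
  qed
  have ex: "ext st st'" unfolding ext_def len using exi by simp
  have tree: "inv_tree E st'" unfolding inv_tree_def
  proof (intro allI impI)
    fix i assume i: "0 < i \<and> i < length (recs st')"
    show "\<exists>j. rpred (recs st' ! i) = Some j \<and> j < length (recs st') \<and> j \<notin> set (queue st') \<and>
          redge (recs st' ! i) = Some (rv (recs st' ! j), rv (recs st' ! i), rtime (recs st' ! i)) \<and>
          (rv (recs st' ! j), rv (recs st' ! i), rtime (recs st' ! i)) \<in> E \<and>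
          rtime (recs st' ! j) \<le> rtime (recs st' ! i) \<and> rlev (recs st' ! i) = Suc (rlev (recs st' ! j))"
    proof (cases "i \<in> set Qd")
      case False
      then obtain j where j: "rpred (recs st ! i) = Some j" "j < ?n" "j \<notin> set (queue st)"
          "redge (recs st ! i) = Some (rv (recs st ! j), rv (recs st ! i), rtime (recs st ! i))"
          "(rv (recs st ! j), rv (recs st ! i), rtime (recs st ! i)) \<in> E"
          "rtime (recs st ! j) \<le> rtime (recs st ! i)" "rlev (recs st ! i) = Suc (rlev (recs st ! j))"
        using BD(7) i len unfolding inv_tree_def by auto
      have e1: "recs st' ! i = recs st ! i" using nthO False i len by auto
      have e2: "recs st' ! j = recs st ! j" using nthQ j by auto
      show ?thesis by (intro exI[of _ j], simp only: e1 e2 rs(1) len) (use j in auto)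
    next
      case True
      have e1: "recs st' ! i = f (recs st ! i)" using nthU True by auto
      have e2: "recs st' ! r = recs st ! r" using nthQ F(2,3) by auto
      have "rv (recs st ! i) = x" "rlev (recs st ! i) = Suc d" using True sQd by auto
      then have fR: "rpred (f (recs st ! i)) = Some r" "redge (f (recs st ! i)) = Some (u, x, tm)"
         "rv (f (recs st ! i)) = x" "rtime (f (recs st ! i)) = tm" "rlev (f (recs st ! i)) = Suc d"
        unfolding f_def by simp_all
      have uE: "(u, x, tm) \<in> E" using eB F(9) by blast
      have tl: "\<tau> \<le> tm" using F(10) eB by fastforce
      show ?thesis
        by (intro exI[of _ r], simp only: e1 e2 rs(1) len fR F(4,5,6)) (simp add: F(2,3) uE tl)
    qed
  qed
  have s4: "\<forall>b<length (recs st'). sig st' (rv (recs st' ! b)) \<le> ereal (rtime (recs st' ! b))"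
  proof (intro allI impI)
    fix b assume b: "b < length (recs st')"
    show "sig st' (rv (recs st' ! b)) \<le> ereal (rtime (recs st' ! b))"
    proof (cases "b \<in> set Qd")
      case True
      then have "recs st' ! b = f (recs st ! b)" "rv (recs st ! b) = x" using nthU sQd by auto
      then show ?thesis unfolding rs(2) f_def by simp
    next
      case False
      then have eq: "recs st' ! b = recs st ! b" using nthO b len by auto
      have h: "sig st (rv (recs st ! b)) \<le> ereal (rtime (recs st ! b))" using BD(8) b len by auto
      show ?thesis unfolding eq rs(2) using h sigle[of b] b len
        by (cases "rv (recs st ! b) = x") auto
    qed
  qed
  obtain k where k: "k \<in> set Qd" using ne by (cases Qd) auto
  have k2: "recs st' ! k = f (recs st ! k)" "rv (recs st ! k) = x" "rlev (recs st ! k) = Suc d" "k < ?n"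
  proof -
    have "k \<in> {i \<in> set (queue st). rv (recs st ! i) = x \<and> rlev (recs st ! i) = Suc d}" using k sQd by simp
    then show "recs st' ! k = f (recs st ! k)" "rv (recs st ! k) = x" "rlev (recs st ! k) = Suc d" "k < ?n"
      using nthU[OF k] Qn[OF k] by auto
  qed
  have s5: "\<forall>y. sig st' y \<noteq> \<infinity> \<longrightarrow> (\<exists>b<length (recs st'). rv (recs st' ! b) = y \<and> ereal (rtime (recs st' ! b)) \<le> sig st' y)"
  proof (intro allI impI)
    fix y assume y: "sig st' y \<noteq> \<infinity>"
    show "\<exists>b<length (recs st'). rv (recs st' ! b) = y \<and> ereal (rtime (recs st' ! b)) \<le> sig st' y"
    proof (cases "y = x")
      case True then show ?thesis using len k2 unfolding rs(2) f_def by (intro exI[of _ k]) auto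
    next
      case False
      then obtain b where b: "b<?n" "rv (recs st ! b) = y" "ereal (rtime (recs st ! b)) \<le> sig st y"
        using BD(9) y rs(2) by auto
      have r1: "rv (recs st' ! b) = y" "rtime (recs st' ! b) \<le> rtime (recs st ! b)"
        using ex b unfolding ext_def by auto
      have "ereal (rtime (recs st' ! b)) \<le> ereal (rtime (recs st ! b))" using r1(2) by simp
      also have "\<dots> \<le> sig st' y" using b(3) False rs(2) by simp
      finally show ?thesis using r1(1) b(1) len by (intro exI[of _ b]) auto
    qed
  qed
  have s6: "\<forall>e\<in>trav st'. \<exists>a<length (recs st'). a \<notin> set (queue st') \<and> rv (recs st' ! a) = fst e \<and> rtime (recs st' ! a) \<le> snd (snd e)"
  proof
    fix e assume "e \<in> trav st'"
    then consider "e = (u, x, tm)" | "e \<in> trav st" using rs(3) by auto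
    then show "\<exists>a<length (recs st'). a \<notin> set (queue st') \<and> rv (recs st' ! a) = fst e \<and> rtime (recs st' ! a) \<le> snd (snd e)"
    proof cases
      case 1 then show ?thesis using F(2,3,4,5,10) eB nthQ[of r] len rs(1) by (intro exI[of _ r]) auto
    next
      case 2
      then obtain a where "a<?n" "a \<notin> set (queue st)" "rv (recs st ! a) = fst e" "rtime (recs st ! a) \<le> snd (snd e)"
        using BD(10) by blast
      then show ?thesis using nthQ[of a] len rs(1) by (intro exI[of _ a]) auto
    qed
  qed
  have "0 \<notin> set Qd" using Qn by blast
  moreover have n0: "0 < ?n" using BD(1) by simp
  ultimately have r0: "recs st' ! 0 = recs st ! 0" using nthO by blast
  have ne': "recs st' \<noteq> []" using len n0 by auto
  have q1: "\<forall>q\<in>set (queue st'). q < length (recs st')" using BD(6) rs(1) len by simp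
  have bs: "base E s ts st'" unfolding base_def r0
    using BD(2-5) ne' q1 tree s4 s5 s6 rs(1) by simp
  have wx: "wit st' x (Suc d) tm" unfolding wit_def
  proof (intro exI[of _ k] conjI)
    show "k < length (recs st')" using len k2 by simp
    show "rv (recs st' ! k) = x" "rlev (recs st' ! k) \<le> Suc d" "rtime (recs st' ! k) \<le> tm"
      unfolding k2(1) using k2 by (simp_all add: f_def)
  qed
  show ?thesis
    by (rule FI_trans[OF FI ex bs, where news = "[]"]) (use wx tmle len rs(1) in auto)
qed

lemma pv_update:
  fixes st :: "'v bstate"
  assumes FI: "FI E s ts r u \<tau> d B W st"
    and eB: "(u, x, tm) \<in> B" and tmle: "\<forall>t. (u, x, t) \<in> B \<longrightarrow> tm \<le> t"
    and gt: "ereal tm < sig st x"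
    and Qd: "Qd = [i\<leftarrow>[i\<leftarrow>queue st. rv (recs st ! i) = x]. rlev (recs st ! i) = Suc d]"
    and ne: "Qd \<noteq> []"
  shows "FI E s ts r u \<tau> d B (insert x W) (st\<lparr>trav := insert (u, x, tm) (trav st),
     recs := fold (\<lambda>i rs. rs[i := (rs ! i)\<lparr>rtime := tm, rpred := Some r, redge := Some (u, x, tm)\<rparr>]) Qd (recs st),
     sig := (sig st)(x := ereal tm)\<rparr>)"
proof (rule pv_update_gen[OF FI eB tmle gt Qd ne refl])
  let ?f = "\<lambda>R::'v brec. R\<lparr>rtime := tm, rpred := Some r, redge := Some (u, x, tm)\<rparr>"
  have ff: "\<And>R. ?f (?f R) = ?f R" by simp
  show "length (recs (st\<lparr>trav := insert (u, x, tm) (trav st),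
     recs := fold (\<lambda>i rs. rs[i := (rs ! i)\<lparr>rtime := tm, rpred := Some r, redge := Some (u, x, tm)\<rparr>]) Qd (recs st),
     sig := (sig st)(x := ereal tm)\<rparr>)) = length (recs st)" using fold_upd_len[of ?f] by simp
  fix k assume "k < length (recs st)"
  then show "recs (st\<lparr>trav := insert (u, x, tm) (trav st),
     recs := fold (\<lambda>i rs. rs[i := (rs ! i)\<lparr>rtime := tm, rpred := Some r, redge := Some (u, x, tm)\<rparr>]) Qd (recs st),
     sig := (sig st)(x := ereal tm)\<rparr>) ! k = (if k \<in> set Qd then ?f (recs st ! k) else recs st ! k)"
    using fold_upd_nth[of ?f, OF ff] by simp
qed simp_all

lemma pv:
  fixes st :: "'v bstate"
  assumes FI: "FI E s ts r u \<tau> d B W st" and xB: "\<exists>t. (u, x, t) \<in> B"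
  shows "FI E s ts r u \<tau> d B (insert x W) (process_vertex B r st x)"
proof -
  note F = FI_D[OF FI]
  define tm where "tm = Min {t. (u, x, t) \<in> B}"
  have fin: "finite {t. (u, x, t) \<in> B}"
    by (rule finite_subset[of _ "(\<lambda>e. snd (snd e)) ` B"]) (use F(8) in force)+
  have eB: "(u, x, tm) \<in> B" unfolding tm_def using Min_in[OF fin] xB by auto
  have tmle: "\<forall>t. (u, x, t) \<in> B \<longrightarrow> tm \<le> t" unfolding tm_def using Min_le[OF fin] by auto
  define Qd where "Qd = [i\<leftarrow>[i\<leftarrow>queue st. rv (recs st ! i) = x]. rlev (recs st ! i) = Suc d]"
  have pvd: "process_vertex B r st x = (let inQ = [i\<leftarrow>queue st. rv (recs st ! i) = x] in
      if inQ = [] \<and> sig st x > ereal tm then st\<lparr>trav := insert (u, x, tm) (trav st),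
     recs := recs st @ [\<lparr>rv = x, rlev = Suc d, rtime = tm, rpred = Some r, redge = Some (u, x, tm)\<rparr>],
     queue := queue st @ [length (recs st)], sig := (sig st)(x := ereal tm)\<rparr>
      else if Qd \<noteq> [] \<and> sig st x > ereal tm then st\<lparr>trav := insert (u, x, tm) (trav st),
     recs := fold (\<lambda>i rs. rs[i := (rs ! i)\<lparr>rtime := tm, rpred := Some r, redge := Some (u, x, tm)\<rparr>]) Qd (recs st),
     sig := (sig st)(x := ereal tm)\<rparr>
      else if inQ \<noteq> [] \<and> Qd = [] \<and> sig st x > ereal tm then st\<lparr>trav := insert (u, x, tm) (trav st),
     recs := recs st @ [\<lparr>rv = x, rlev = Suc d, rtime = tm, rpred = Some r, redge = Some (u, x, tm)\<rparr>],
     queue := queue st @ [length (recs st)], sig := (sig st)(x := ereal tm)\<rparr>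
      else st\<lparr>trav := insert (u, x, tm) (trav st)\<rparr>)"
    unfolding process_vertex_def Let_def F(4) F(6) tm_def Qd_def ..
  show ?thesis
  proof (cases "sig st x > ereal tm")
    case False
    then show ?thesis unfolding pvd Let_def using pv_noop[OF FI eB tmle False] by simp
  next
    case gt: True
    show ?thesis
    proof (cases "Qd = []")
      case True
      then show ?thesis unfolding pvd Let_def using pv_create[OF FI eB tmle gt] gt by auto
    next
      case False
      then have "[i\<leftarrow>queue st. rv (recs st ! i) = x] \<noteq> []" unfolding Qd_def by (auto simp: filter_empty_conv)
      then show ?thesis unfolding pvd Let_def using pv_update[OF FI eB tmle gt Qd_def False] gt False by simp
    qed
  qed
qed

lemma pv_fold:
  fixes st :: "'v bstate"
  assumes "FI E s ts r u \<tau> d B W st" and "\<forall>x\<in>set vs. \<exists>t. (u, x, t) \<in> B"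
  shows "FI E s ts r u \<tau> d B (W \<union> set vs) (fold (\<lambda>v st'. process_vertex B r st' v) vs st)"
  using assms
proof (induction vs arbitrary: W st)
  case Nil then show ?case by simp
next
  case (Cons a vs)
  have h: "FI E s ts r u \<tau> d B (insert a W) (process_vertex B r st a)" by (rule pv[OF Cons.prems(1)]) (use Cons.prems(2) in simp)
  have "FI E s ts r u \<tau> d B (insert a W \<union> set vs) (fold (\<lambda>v st'. process_vertex B r st' v) vs (process_vertex B r st a))"
    by (rule Cons.IH[OF h]) (use Cons.prems(2) in simp)
  then show ?case by simp
qed

definition Inv :: "'v tedge set \<Rightarrow> 'v \<Rightarrow> real \<Rightarrow> 'v bstate \<Rightarrow> bool" where
"Inv E s ts st \<longleftrightarrow> base E s ts st \<and> sorted (map (\<lambda>i. rlev (recs st ! i)) (queue st)) \<and>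
  (queue st \<noteq> [] \<longrightarrow> (\<forall>b<length (recs st). rlev (recs st ! b) \<le> Suc (rlev (recs st ! hd (queue st))))) \<and>
  (\<forall>a<length (recs st). a \<notin> set (queue st) \<longrightarrow> (\<forall>q\<in>set (queue st). rlev (recs st ! a) \<le> rlev (recs st ! q)) \<and> clos E st a)"

lemma Inv_init: "Inv E s ts (bfs_init s ts)"
  unfolding Inv_def base_def inv_tree_def bfs_init_def by auto

lemma FI_to_Inv:
  assumes FI: "FI E s ts r u \<tau> d B W st" and W: "{x. \<exists>t. (u, x, t) \<in> B} \<subseteq> W"
  shows "Inv E s ts st"
proof -
  have F: "base E s ts st" "r < length (recs st)" "r \<notin> set (queue st)" "rv (recs st ! r) = u"
  "rtime (recs st ! r) = \<tau>" "rlev (recs st ! r) = d"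
  "\<forall>b<length (recs st). rlev (recs st ! b) \<le> Suc d" "sorted (map (\<lambda>i. rlev (recs st ! i)) (queue st))"
  "\<forall>q\<in>set (queue st). d \<le> rlev (recs st ! q)"
  "\<forall>a<length (recs st). a \<notin> set (queue st) \<longrightarrow> rlev (recs st ! a) \<le> d"
  "\<forall>a<length (recs st). a \<notin> set (queue st) \<and> a \<noteq> r \<longrightarrow> clos E st a"
  "\<forall>x t. (u, x, t) \<in> E \<and> \<tau> \<le> t \<and> ((u, x, t) \<notin> B \<or> x \<in> W) \<longrightarrow> wit st x (Suc d) t"
    using FI unfolding FI_def by blast+
  have hd: "queue st \<noteq> [] \<longrightarrow> (\<forall>b<length (recs st). rlev (recs st ! b) \<le> Suc (rlev (recs st ! hd (queue st))))"
  proof (intro impI allI)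
    fix b assume ne: "queue st \<noteq> []" and b: "b < length (recs st)"
    have "d \<le> rlev (recs st ! hd (queue st))" using F(9) hd_in_set[OF ne] by blast
    moreover have "rlev (recs st ! b) \<le> Suc d" using F(7) b by blast
    ultimately show "rlev (recs st ! b) \<le> Suc (rlev (recs st ! hd (queue st)))" by simp
  qed
  have cr: "clos E st r" unfolding clos_def F(4,5,6)
  proof (intro allI impI)
    fix x t assume a: "(u, x, t) \<in> E \<and> \<tau> \<le> t"
    then have "(u, x, t) \<notin> B \<or> x \<in> W" using W by blast
    then show "wit st x (Suc d) t" using F(12) a by simp
  qed
  have p: "\<forall>a<length (recs st). a \<notin> set (queue st) \<longrightarrow> (\<forall>q\<in>set (queue st). rlev (recs st ! a) \<le> rlev (recs st ! q)) \<and> clos E st a"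
  proof (intro allI impI conjI ballI)
    fix a q assume a: "a < length (recs st)" "a \<notin> set (queue st)" and q: "q \<in> set (queue st)"
    have "rlev (recs st ! a) \<le> d" using F(10) a by blast
    moreover have "d \<le> rlev (recs st ! q)" using F(9) q by blast
    ultimately show "rlev (recs st ! a) \<le> rlev (recs st ! q)" by simp
  next
    fix a assume a: "a < length (recs st)" "a \<notin> set (queue st)"
    show "clos E st a" using F(11) a cr by (cases "a = r") auto
  qed
  show ?thesis unfolding Inv_def using F(1,8) hd p by blast
qed

lemma Inv_step:
  assumes fE: "finite E" and I: "Inv E s ts st" and st: "bfs_step E st st'"
  shows "Inv E s ts st'"
  using st
proof cases
  case (1 r rest B vs)
  define u where "u = rv (recs st ! r)"
  define \<tau> where "\<tau> = rtime (recs st ! r)"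
  define d where "d = rlev (recs st ! r)"
  let ?st1 = "st\<lparr>queue := rest\<rparr>"
  have I1: "base E s ts st" "sorted (map (\<lambda>i. rlev (recs st ! i)) (queue st))"
    "\<forall>b<length (recs st). rlev (recs st ! b) \<le> Suc d"
    "\<forall>a<length (recs st). a \<notin> set (queue st) \<longrightarrow> (\<forall>q\<in>set (queue st). rlev (recs st ! a) \<le> rlev (recs st ! q)) \<and> clos E st a"
  proof -
    have J: "base E s ts st" "sorted (map (\<lambda>i. rlev (recs st ! i)) (queue st))"
      "queue st \<noteq> [] \<longrightarrow> (\<forall>b<length (recs st). rlev (recs st ! b) \<le> Suc (rlev (recs st ! hd (queue st))))"
      "\<forall>a<length (recs st). a \<notin> set (queue st) \<longrightarrow> (\<forall>q\<in>set (queue st). rlev (recs st ! a) \<le> rlev (recs st ! q)) \<and> clos E st a"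
      using I unfolding Inv_def by blast+
    have "hd (queue st) = r" "queue st \<noteq> []" using 1(2) by simp_all
    then show "base E s ts st" "sorted (map (\<lambda>i. rlev (recs st ! i)) (queue st))"
    "\<forall>b<length (recs st). rlev (recs st ! b) \<le> Suc d"
    "\<forall>a<length (recs st). a \<notin> set (queue st) \<longrightarrow> (\<forall>q\<in>set (queue st). rlev (recs st ! a) \<le> rlev (recs st ! q)) \<and> clos E st a"
      using J unfolding d_def by simp_all
  qed
  note BD = base_D[OF I1(1)]
  have rn: "r < length (recs st)" using BD(6) 1(2) by auto
  have rr: "r \<notin> set rest" using BD(5) 1(2) by auto
  have srt: "sorted (map (\<lambda>i. rlev (recs st ! i)) rest)" "\<forall>q\<in>set rest. d \<le> rlev (recs st ! q)"
    using I1(2) 1(2) unfolding d_def by auto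
  have base1: "base E s ts ?st1" using I1(1) 1(2) unfolding base_def inv_tree_def by auto
  have clos1: "\<And>a. clos E ?st1 a = clos E st a" unfolding clos_def wit_def by simp
  have wit1: "\<And>x L t. wit ?st1 x L t = wit st x L t" unfolding wit_def by simp
  have plev: "\<forall>a<length (recs st). a \<notin> set rest \<longrightarrow> rlev (recs st ! a) \<le> d"
    using I1(4) 1(2) unfolding d_def by auto
  have pclos: "\<forall>a<length (recs st). a \<notin> set rest \<and> a \<noteq> r \<longrightarrow> clos E ?st1 a"
    using I1(4) 1(2) clos1 by auto
  have pw: "\<forall>x t. (u, x, t) \<in> E \<and> \<tau> \<le> t \<and> ((u, x, t) \<notin> B \<or> x \<in> {}) \<longrightarrow> wit ?st1 x (Suc d) t"
  proof (intro allI impI)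
    fix x t assume a: "(u, x, t) \<in> E \<and> \<tau> \<le> t \<and> ((u, x, t) \<notin> B \<or> x \<in> {})"
    then have "(u, x, t) \<in> trav st" using 1(3) unfolding u_def \<tau>_def by auto
    then obtain b where b: "b < length (recs st)" "b \<notin> set (queue st)" "rv (recs st ! b) = u" "rtime (recs st ! b) \<le> t"
      using BD(10) by fastforce
    have "clos E st b" "rlev (recs st ! b) \<le> d" using I1(4) b 1(2) unfolding d_def by auto
    then have "wit st x (Suc (rlev (recs st ! b))) t" using b a unfolding clos_def by auto
    then show "wit ?st1 x (Suc d) t" unfolding wit1 using \<open>rlev (recs st ! b) \<le> d\<close> wit_mono by fastforce
  qed
  have Bp: "finite B" "B \<subseteq> E" "\<forall>e\<in>B. fst e = u \<and> \<tau> \<le> snd (snd e)"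
    using fE 1(3) unfolding u_def \<tau>_def by auto
  have FI1: "FI E s ts r u \<tau> d B {} ?st1" unfolding FI_def
    using base1 rn rr I1(3) srt plev pclos pw Bp unfolding u_def \<tau>_def d_def by simp
  have vsB: "\<forall>x\<in>set vs. \<exists>t. (u, x, t) \<in> B" using 1(5) unfolding u_def by auto
  have FI2: "FI E s ts r u \<tau> d B ({} \<union> set vs) st'" unfolding 1(1) u_def
    using pv_fold[OF FI1 vsB] unfolding u_def by simp
  show ?thesis by (rule FI_to_Inv[OF FI2]) (use 1(5) u_def in auto)
qed

lemma Inv_reach:
  assumes "finite E" "(bfs_step E)\<^sup>*\<^sup>* (bfs_init s ts) st"
  shows "Inv E s ts st"
  using assms(2)
proof (induction rule: rtranclp_induct)
  case base then show ?case by (rule Inv_init)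
next
  case (step y z) then show ?case using Inv_step[OF assms(1)] by blast
qed

lemma tp_single: "e \<in> E \<Longrightarrow> fst e = x \<Longrightarrow> fst (snd e) = y \<Longrightarrow> ts \<le> snd (snd e) \<Longrightarrow> temporal_path E ts x y [e]"
  by (simp add: temporal_path_def)

lemma tp_snoc:
  assumes P: "temporal_path E ts x y P" and e: "(y, z, t) \<in> E" and le: "snd (snd (last P)) \<le> t"
  shows "temporal_path E ts x z (P @ [(y, z, t)])"
proof -
  have P1: "P \<noteq> []" "set P \<subseteq> E" "fst (hd P) = x" "fst (snd (last P)) = y"
    "\<forall>i. Suc i < length P \<longrightarrow> fst (snd (P ! i)) = fst (P ! Suc i)" "ts \<le> snd (snd (hd P))"
    "\<forall>i. Suc i < length P \<longrightarrow> snd (snd (P ! i)) \<le> snd (snd (P ! Suc i))"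
    using P unfolding temporal_path_def by blast+
  have lastn: "last P = P ! (length P - 1)" using P1(1) by (simp add: last_conv_nth)
  have c1: "\<forall>i. Suc i < length (P @ [(y, z, t)]) \<longrightarrow> fst (snd ((P @ [(y, z, t)]) ! i)) = fst ((P @ [(y, z, t)]) ! Suc i)"
  proof (intro allI impI)
    fix i assume i: "Suc i < length (P @ [(y, z, t)])"
    show "fst (snd ((P @ [(y, z, t)]) ! i)) = fst ((P @ [(y, z, t)]) ! Suc i)"
    proof (cases "Suc i < length P")
      case True then show ?thesis using P1(5) by (simp add: nth_append)
    next
      case False then have "i = length P - 1" "i < length P" using i P1(1) by auto
      then show ?thesis using P1(1,4) lastn by (auto simp: nth_append)
    qed
  qed
  have c2: "\<forall>i. Suc i < length (P @ [(y, z, t)]) \<longrightarrow> snd (snd ((P @ [(y, z, t)]) ! i)) \<le> snd (snd ((P @ [(y, z, t)]) ! Suc i))"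
  proof (intro allI impI)
    fix i assume i: "Suc i < length (P @ [(y, z, t)])"
    show "snd (snd ((P @ [(y, z, t)]) ! i)) \<le> snd (snd ((P @ [(y, z, t)]) ! Suc i))"
    proof (cases "Suc i < length P")
      case True then show ?thesis using P1(7) by (simp add: nth_append)
    next
      case False then have "i = length P - 1" "i < length P" using i P1(1) by auto
      then show ?thesis using P1(1) le lastn by (auto simp: nth_append)
    qed
  qed
  show ?thesis unfolding temporal_path_def using P1 e c1 c2 by simp
qed

lemma tp_butlast:
  assumes P: "temporal_path E ts x y (P @ [e])" and ne: "P \<noteq> []"
  shows "temporal_path E ts x (fst e) P \<and> snd (snd (last P)) \<le> snd (snd e) \<and> e \<in> E \<and> fst (snd e) = y"
proof -
  have P1: "set (P @ [e]) \<subseteq> E" "fst (hd (P @ [e])) = x" "fst (snd (last (P @ [e]))) = y"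
    "\<forall>i. Suc i < length (P @ [e]) \<longrightarrow> fst (snd ((P @ [e]) ! i)) = fst ((P @ [e]) ! Suc i)" "ts \<le> snd (snd (hd (P @ [e])))"
    "\<forall>i. Suc i < length (P @ [e]) \<longrightarrow> snd (snd ((P @ [e]) ! i)) \<le> snd (snd ((P @ [e]) ! Suc i))"
    using P unfolding temporal_path_def by blast+
  have lastn: "last P = P ! (length P - 1)" using ne by (simp add: last_conv_nth)
  have k: "Suc (length P - 1) < length (P @ [e])" "length P - 1 < length P" using ne by auto
  have a1: "fst (snd (last P)) = fst e" using P1(4)[rule_format, OF k(1)] k(2) ne lastn
    by (simp add: nth_append)
  have a2: "snd (snd (last P)) \<le> snd (snd e)" using P1(6)[rule_format, OF k(1)] k(2) ne lastn
    by (simp add: nth_append)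
  have c1: "\<forall>i. Suc i < length P \<longrightarrow> fst (snd (P ! i)) = fst (P ! Suc i)"
  proof (intro allI impI)
    fix i assume i: "Suc i < length P"
    then show "fst (snd (P ! i)) = fst (P ! Suc i)" using P1(4)[rule_format, of i] by (simp add: nth_append)
  qed
  have c2: "\<forall>i. Suc i < length P \<longrightarrow> snd (snd (P ! i)) \<le> snd (snd (P ! Suc i))"
  proof (intro allI impI)
    fix i assume i: "Suc i < length P"
    then show "snd (snd (P ! i)) \<le> snd (snd (P ! Suc i))" using P1(6)[rule_format, of i] by (simp add: nth_append)
  qed
  show ?thesis unfolding temporal_path_def using P1 ne a1 a2 c1 c2 by simp
qed

lemma tree_ex:
  assumes I: "Inv E s ts st"
  shows "i < length (recs st) \<Longrightarrow> rlev (recs st ! i) = k \<Longrightarrow> \<exists>P. tree_path st i P \<and> length P = k \<and>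
    (i \<noteq> 0 \<longrightarrow> temporal_path E ts s (rv (recs st ! i)) P \<and> snd (snd (last P)) = rtime (recs st ! i))"
proof (induction k arbitrary: i)
  case 0
  have BD: "base E s ts st" using I unfolding Inv_def by blast
  note B = base_D[OF BD]
  have "i = 0"
  proof (rule ccontr)
    assume "i \<noteq> 0"
    then obtain j where "rlev (recs st ! i) = Suc (rlev (recs st ! j))" using B(7) 0 unfolding inv_tree_def by blast
    then show False using 0 by simp
  qed
  then show ?case by (intro exI[of _ "[]"]) (simp add: tree_path.root)
next
  case (Suc k)
  have BD: "base E s ts st" using I unfolding Inv_def by blast
  note B = base_D[OF BD]
  have i0: "0 < i"
  proof (rule ccontr)
    assume "\<not> 0 < i" then have "i = 0" by simp
    then show False using Suc.prems B(3) by simp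
  qed
  then obtain j where j: "rpred (recs st ! i) = Some j" "j < length (recs st)"
     "redge (recs st ! i) = Some (rv (recs st ! j), rv (recs st ! i), rtime (recs st ! i))"
     "(rv (recs st ! j), rv (recs st ! i), rtime (recs st ! i)) \<in> E"
     "rtime (recs st ! j) \<le> rtime (recs st ! i)" "rlev (recs st ! i) = Suc (rlev (recs st ! j))"
    using B(7) Suc.prems(1) unfolding inv_tree_def by blast
  have "rlev (recs st ! j) = k" using j(6) Suc.prems by simp
  then obtain P where P: "tree_path st j P" "length P = k"
    "j \<noteq> 0 \<longrightarrow> temporal_path E ts s (rv (recs st ! j)) P \<and> snd (snd (last P)) = rtime (recs st ! j)"
    using Suc.IH j(2) by blast
  let ?e = "(rv (recs st ! j), rv (recs st ! i), rtime (recs st ! i))"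
  have tp: "tree_path st i (P @ [?e])" by (rule tree_path.step[OF Suc.prems(1) j(1) j(3) P(1)])
  have temp: "temporal_path E ts s (rv (recs st ! i)) (P @ [?e])"
  proof (cases "j = 0")
    case True
    then have "P = []" using P(2) B(3) \<open>rlev (recs st ! j) = k\<close> by simp
    then show ?thesis using tp_single[of ?e E s "rv (recs st ! i)" ts] j(4,5) True B(2,4) by simp
  next
    case False
    then show ?thesis using tp_snoc[of E ts s "rv (recs st ! j)" P "rv (recs st ! i)" "rtime (recs st ! i)"] P(3) j(4,5) by simp
  qed
  show ?case using tp temp P(2) by (intro exI[of _ "P @ [?e]"]) simp
qed

lemma reach:
  assumes I: "Inv E s ts st" and q: "queue st = []"
  shows "temporal_path E ts s x P \<Longrightarrow> wit st x (length P) (snd (snd (last P)))"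
proof (induction P arbitrary: x rule: rev_induct)
  case Nil then show ?case by (simp add: temporal_path_def)
next
  case (snoc e P)
  have BD: "base E s ts st" and cl: "\<forall>a<length (recs st). clos E st a" using I q unfolding Inv_def by auto
  note B = base_D[OF BD]
  obtain y z t where e: "e = (y, z, t)" by (cases e) auto
  show ?case
  proof (cases "P = []")
    case True
    then have "e \<in> E" "fst e = s" "ts \<le> snd (snd e)" "fst (snd e) = x" using snoc.prems by (auto simp: temporal_path_def)
    moreover have "0 < length (recs st)" using B(1) by simp
    ultimately have "wit st x (Suc (rlev (recs st ! 0))) t" using cl B(2,4) e unfolding clos_def by auto
    then show ?thesis using True B(3) e by simp
  next
    case False
    note tb = tp_butlast[OF snoc.prems False]
    have "wit st (fst e) (length P) (snd (snd (last P)))" using snoc.IH tb by blast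
    then obtain b where b: "b < length (recs st)" "rv (recs st ! b) = y" "rlev (recs st ! b) \<le> length P"
      "rtime (recs st ! b) \<le> snd (snd (last P))" unfolding wit_def e by auto
    have "rtime (recs st ! b) \<le> t" using b(4) tb e by simp
    moreover have "(y, z, t) \<in> E" "z = x" using tb e by auto
    ultimately have "wit st x (Suc (rlev (recs st ! b))) t" using cl b unfolding clos_def by auto
    then show ?thesis using b(3) e wit_mono by fastforce
  qed
qed

theorem mainTheorem18:
  fixes V :: "'v set" and E :: "'v tedge set" and s v :: 'v and ts :: real and st :: "'v bstate"
  assumes "finite V" and "finite E"
    and "\<forall>(x, y, t) \<in> E. x \<in> V \<and> y \<in> V \<and> x \<noteq> y"
    and "s \<in> V" and "v \<in> V" and "v \<noteq> s"
    and "bfs_final E s ts st"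
  shows "(occurs st v \<longrightarrow> (\<forall>i. min_level_occ st v i \<longrightarrow>
            (\<exists>P. tree_path st i P \<and> shortest_temporal_path E ts s v P)))
       \<and> (\<not> occurs st v \<longrightarrow> \<not> (\<exists>P. temporal_path E ts s v P))"
proof -
  have I: "Inv E s ts st" using Inv_reach[OF assms(2)] assms(7) unfolding bfs_final_def by blast
  have q: "queue st = []" using assms(7) unfolding bfs_final_def by blast
  have BD: "base E s ts st" using I unfolding Inv_def by blast
  note B = base_D[OF BD]
  have R: "\<And>P. temporal_path E ts s v P \<Longrightarrow> wit st v (length P) (snd (snd (last P)))"
    using reach[OF I q] by blast
  have part1: "\<forall>i. min_level_occ st v i \<longrightarrow> (\<exists>P. tree_path st i P \<and> shortest_temporal_path E ts s v P)"
  proof (intro allI impI)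
    fix i assume m: "min_level_occ st v i"
    then have i: "i < length (recs st)" "rv (recs st ! i) = v"
      "\<forall>j<length (recs st). rv (recs st ! j) = v \<longrightarrow> rlev (recs st ! i) \<le> rlev (recs st ! j)"
      unfolding min_level_occ_def by auto
    have i0: "i \<noteq> 0" using i(2) B(2) assms(6) by (metis)
    obtain P where P: "tree_path st i P" "length P = rlev (recs st ! i)"
      "temporal_path E ts s (rv (recs st ! i)) P"
      using tree_ex[OF I i(1) refl] i0 by blast
    have "shortest_temporal_path E ts s v P" unfolding shortest_temporal_path_def
    proof (intro conjI allI impI)
      show "temporal_path E ts s v P" using P(3) i(2) by simp
      fix Q assume "temporal_path E ts s v Q"
      then obtain b where "b < length (recs st)" "rv (recs st ! b) = v" "rlev (recs st ! b) \<le> length Q"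
        using R unfolding wit_def by blast
      then show "length P \<le> length Q" using i(3) P(2) by fastforce
    qed
    then show "\<exists>P. tree_path st i P \<and> shortest_temporal_path E ts s v P" using P(1) by blast
  qed
  have part2: "\<not> occurs st v \<longrightarrow> \<not> (\<exists>P. temporal_path E ts s v P)"
    using R unfolding occurs_def wit_def by blast
  show ?thesis using part1 part2 by blast
qed

end
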